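(* Let $f: \mathbb{R}^n \to \mathbb{R}^n$ be topical and $x \in \mathbb{R}^n$. There exists $1 \le i \le n$ such that for all $k \in \mathbb{N}$, $x_i + k\,\overline{\chi}(f) \le f^k_i(x)$.
   Context: $f$ is topical if $f(x+h) = f(x)+h$ for all $h\in\mathbb{R}$ (scalar added to each coordinate) and $x\le y$ componentwise implies $f(x)\le f(y)$. The upper cycle time is $\overline{\chi}(f) = \lim_{k\to\infty} \max_i f^k_i(x)/k$, which exists and is independent of $x$. *)

theory Defs
  imports "HOL-Analysis.Analysis"
begin

definition topical :: "(real^'n \<Rightarrow> real^'n) \<Rightarrow> bool" where
  "topical f \<longleftrightarrow>
     (\<forall>x (h::real). f (x + (\<chi> i. h)) = f x + (\<chi> i. h)) \<and>
     (\<forall>x y. (\<forall>i. x $ i \<le> y $ i) \<longrightarrow> (\<forall>i. f x $ i \<le> f y $ i))"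

definition upper_cycle_time :: "(real^'n \<Rightarrow> real^'n) \<Rightarrow> real" where
  "upper_cycle_time f =
     (THE c. \<forall>x. (\<lambda>k::nat. Max (range (\<lambda>i. (f ^^ k) x $ i)) / real k) \<longlonglongrightarrow> c)"

end

theory Submission
  imports Defs
begin

lemma fekete:
  fixes a :: "nat \<Rightarrow> real"
  assumes sub: "\<And>m n. a (m+n) \<le> a m + a n" and low: "\<And>n. real n * d \<le> a n"
  shows "\<exists>L. (\<lambda>n. a n / real n) \<longlonglongrightarrow> L \<and> (\<forall>n. real n * L \<le> a n)"
proof -
  define S where "S = (\<lambda>n. a n / real n) ` {1..}"
  define L where "L = Inf S"
  have Sne: "S \<noteq> {}" unfolding S_def by auto
  have bdd: "bdd_below S" unfolding S_def bdd_below_def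
  proof (intro exI[of _ d] ballI)
    fix y assume "y \<in> (\<lambda>n. a n / real n) ` {1..}"
    then obtain n where n: "n \<ge> 1" "y = a n / real n" by auto
    then show "d \<le> y" using low[of n] by (simp add: le_divide_eq mult.commute)
  qed
  have Lle: "L \<le> a n / real n" if "n \<ge> 1" for n
    unfolding L_def by (rule cInf_lower[OF _ bdd]) (use that in \<open>auto simp: S_def\<close>)
  have a0: "a 0 \<ge> 0" using sub[of 0 0] by simp
  have part2: "\<forall>n. real n * L \<le> a n"
  proof
    fix n show "real n * L \<le> a n"
    proof (cases "n = 0")
      case True then show ?thesis using a0 by simp
    next
      case False
      then have "L \<le> a n / real n" using Lle by simp
      then show ?thesis using False by (simp add: field_simps)
    qed
  qed
  have mult: "a (q*m + r) \<le> real q * a m + a r" for q m r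
  proof (induction q)
    case 0 then show ?case by simp
  next
    case (Suc q)
    have "a (Suc q * m + r) = a (m + (q*m + r))" by (simp add: algebra_simps)
    also have "\<dots> \<le> a m + a (q*m + r)" by (rule sub)
    also have "\<dots> \<le> real (Suc q) * a m + a r" using Suc by (simp add: algebra_simps)
    finally show ?case .
  qed
  have "(\<lambda>n. a n / real n) \<longlonglongrightarrow> L"
  proof (rule LIMSEQ_I)
    fix e :: real assume e: "0 < e"
    have "Inf S < L + e/2" using e unfolding L_def by simp
    then obtain m where m: "m \<ge> 1" "a m / real m < L + e/2"
      using cInf_less_iff[OF Sne bdd] unfolding S_def by auto
    define B where "B = \<bar>a 0\<bar> + real m * \<bar>a 1\<bar>"
    have aB: "a r \<le> B" if "r < m" for r
    proof -
      have "a r \<le> real r * a 1 + a 0" using mult[of r 1 0] by simp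
      also have "\<dots> \<le> real m * \<bar>a 1\<bar> + \<bar>a 0\<bar>"
      proof -
        have "real r * a 1 \<le> real r * \<bar>a 1\<bar>" by (simp add: mult_left_mono)
        also have "\<dots> \<le> real m * \<bar>a 1\<bar>" using that by (simp add: mult_right_mono)
        finally show ?thesis by simp
      qed
      finally show ?thesis unfolding B_def by simp
    qed
    define C where "C = \<bar>a m\<bar> + B"
    have C0: "C \<ge> 0" unfolding C_def B_def by simp
    have key: "a n / real n \<le> a m / real m + C / real n" if "n \<ge> 1" for n
    proof -
      define q where "q = n div m"
      define r where "r = n mod m"
      have nqr: "n = q*m + r" unfolding q_def r_def by simp
      have rm: "r < m" unfolding r_def using m by simp
      have "a n \<le> real q * a m + B" using mult[of q m r] aB[OF rm] nqr by simp
      moreover have "real q * a m = real n * (a m / real m) - real r * (a m / real m)"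
        using m nqr by (simp add: field_simps)
      moreover have "\<bar>real r * (a m / real m)\<bar> \<le> \<bar>a m\<bar>"
      proof -
        have "\<bar>real r * (a m / real m)\<bar> = (real r / real m) * \<bar>a m\<bar>"
          by (simp add: abs_mult)
        also have "\<dots> \<le> 1 * \<bar>a m\<bar>"
          using rm m by (intro mult_right_mono) auto
        finally show ?thesis by simp
      qed
      ultimately have "a n \<le> real n * (a m / real m) + C" unfolding C_def by linarith
      then show ?thesis using that by (simp add: field_simps)
    qed
    obtain N :: nat where N: "N \<ge> 1" "C / real N < e/2"
    proof -
      obtain N0 :: nat where "real N0 > 2 * C / e" using reals_Archimedean2 by blast
      then have "C / real (Suc N0) < e/2" using e C0 by (simp add: field_simps)
      then show ?thesis using that[of "Suc N0"] by simp
    qed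
    show "\<exists>no. \<forall>n\<ge>no. norm (a n / real n - L) < e"
    proof (intro exI[of _ N] allI impI)
      fix n assume n: "N \<le> n"
      then have n1: "n \<ge> 1" using N by simp
      have "C / real n \<le> C / real N" using n N C0 by (simp add: frac_le)
      then have "a n / real n < L + e" using key[OF n1] m N by linarith
      moreover have "L \<le> a n / real n" using Lle[OF n1] .
      ultimately show "norm (a n / real n - L) < e" using e by simp
    qed
  qed
  then show ?thesis using part2 by blast
qed

definition vmax :: "real^'n \<Rightarrow> real" where
  "vmax y = Max (range (\<lambda>i. y $ i))"

lemma vmax_ge: "y $ i \<le> vmax y"
  unfolding vmax_def by (rule Max_ge) auto

lemma vmax_le: "(\<And>i. y $ i \<le> c) \<Longrightarrow> vmax y \<le> c"
  unfolding vmax_def by (auto intro: Max.boundedI)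

lemma vmax_att: "\<exists>i. vmax y = y $ i"
proof -
  have "vmax y \<in> range (\<lambda>i. y $ i)" unfolding vmax_def by (rule Max_in) auto
  then show ?thesis by auto
qed

lemma topical_hom: "topical f \<Longrightarrow> f (x + (\<chi> i. h)) = f x + (\<chi> i. h)"
  unfolding topical_def by blast

lemma topical_mono: "topical f \<Longrightarrow> (\<And>i. x $ i \<le> y $ i) \<Longrightarrow> f x $ i \<le> f y $ i"
  unfolding topical_def by blast

lemma iter_topical:
  assumes "topical f" shows "topical (f ^^ k)"
proof (induction k)
  case 0 then show ?case unfolding topical_def by simp
next
  case (Suc k)
  show ?case unfolding topical_def
  proof (intro conjI allI impI)
    fix x :: "real^'a" and h :: real
    show "(f ^^ Suc k) (x + (\<chi> i. h)) = (f ^^ Suc k) x + (\<chi> i. h)"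
      using topical_hom[OF Suc] topical_hom[OF assms] by simp
  next
    fix x y :: "real^'a" and i
    assume "\<forall>i. x $ i \<le> y $ i"
    then have "\<And>j. (f ^^ k) x $ j \<le> (f ^^ k) y $ j" using topical_mono[OF Suc] by blast
    then show "(f ^^ Suc k) x $ i \<le> (f ^^ Suc k) y $ i"
      using topical_mono[OF assms] by simp
  qed
qed

lemma nonexp:
  assumes "topical g" shows "g y $ i \<le> g z $ i + vmax (y - z)"
proof -
  have "\<And>j. y $ j \<le> (z + (\<chi> i. vmax (y - z))) $ j"
    using vmax_ge[of "y - z"] by (simp add: algebra_simps)
  then have "g y $ i \<le> g (z + (\<chi> i. vmax (y - z))) $ i" by (rule topical_mono[OF assms])
  then show ?thesis using topical_hom[OF assms] by simp
qed

theorem theorem2p4: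
  fixes f :: "real^'n \<Rightarrow> real^'n" and x :: "real^'n"
  assumes "topical f"
  shows "\<exists>i. \<forall>k::nat. x $ i + real k * upper_cycle_time f \<le> (f ^^ k) x $ i"
proof -
  note top = assms
  have itop: "\<And>k. topical (f ^^ k)" by (rule iter_topical[OF top])
  define c where "c k = vmax ((f ^^ k) x - x)" for k
  have sub: "c (m + n) \<le> c m + c n" for m n
  proof -
    have "\<And>i. ((f ^^ (m + n)) x - x) $ i \<le> c m + c n"
    proof -
      fix i
      have "((f ^^ (m + n)) x - x) $ i = (f ^^ m) ((f ^^ n) x) $ i - x $ i"
        by (simp add: funpow_add)
      also have "\<dots> \<le> (f ^^ m) x $ i + vmax ((f ^^ n) x - x) - x $ i"
        using nonexp[OF itop[of m]] by simp
      also have "\<dots> \<le> c m + c n" unfolding c_def using vmax_ge[of "(f ^^ m) x - x" i] by simp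
      finally show "((f ^^ (m + n)) x - x) $ i \<le> c m + c n" .
    qed
    then show ?thesis unfolding c_def[of "m+n"] by (rule vmax_le)
  qed
  define D where "D = vmax (x - f x)"
  have lowc: "\<forall>i. x $ i - real k * D \<le> (f ^^ k) x $ i" for k
  proof (induction k)
    case 0 then show ?case by simp
  next
    case (Suc k)
    show ?case
    proof
      fix i
      have "f x $ i \<le> f ((f ^^ k) x) $ i + vmax (x - (f ^^ k) x)" by (rule nonexp[OF top])
      moreover have "vmax (x - (f ^^ k) x) \<le> real k * D"
      proof (rule vmax_le)
        fix j
        have "x $ j - real k * D \<le> (f ^^ k) x $ j" using Suc.IH by blast
        then show "(x - (f ^^ k) x) $ j \<le> real k * D" by simp
      qed
      moreover have "x $ i - D \<le> f x $ i" using vmax_ge[of "x - f x" i] unfolding D_def by simp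
      ultimately show "x $ i - real (Suc k) * D \<le> (f ^^ Suc k) x $ i" by (simp add: algebra_simps)
    qed
  qed
  have low: "real k * (- D) \<le> c k" for k
  proof -
    have "real k * (- D) \<le> ((f ^^ k) x - x) $ undefined" using spec[OF lowc[of k], of undefined] by simp
    also have "\<dots> \<le> c k" unfolding c_def by (rule vmax_ge)
    finally show ?thesis .
  qed
  obtain L where L1: "(\<lambda>n. c n / real n) \<longlonglongrightarrow> L" and L2: "\<And>n. real n * L \<le> c n"
    using fekete[of c "- D"] sub low by blast
  have seqz: "(\<lambda>k. Max (range (\<lambda>i. (f ^^ k) z $ i)) / real k) \<longlonglongrightarrow> L" for z
  proof -
    define B where "B = \<bar>vmax (z - x)\<bar> + \<bar>vmax x\<bar> + \<bar>vmax (- x)\<bar> + \<bar>vmax (x - z)\<bar>"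
    have bnd: "\<bar>vmax ((f ^^ k) z) - c k\<bar> \<le> B" for k
    proof -
      have 1: "vmax ((f ^^ k) z) \<le> vmax ((f ^^ k) x) + vmax (z - x)"
        by (rule vmax_le) (meson nonexp[OF itop] vmax_ge add_right_mono order_trans)
      have 2: "vmax ((f ^^ k) x) \<le> c k + vmax x"
      proof (rule vmax_le)
        fix i
        have "(f ^^ k) x $ i = ((f ^^ k) x - x) $ i + x $ i" by simp
        then show "(f ^^ k) x $ i \<le> c k + vmax x" unfolding c_def
          using vmax_ge[of "(f ^^ k) x - x" i] vmax_ge[of x i] by linarith
      qed
      have 3: "c k \<le> vmax ((f ^^ k) x) + vmax (- x)" unfolding c_def
      proof (rule vmax_le)
        fix i
        show "((f ^^ k) x - x) $ i \<le> vmax ((f ^^ k) x) + vmax (- x)"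
          using vmax_ge[of "(f ^^ k) x" i] vmax_ge[of "- x" i] by simp
      qed
      have 4: "vmax ((f ^^ k) x) \<le> vmax ((f ^^ k) z) + vmax (x - z)"
        by (rule vmax_le) (meson nonexp[OF itop] vmax_ge add_right_mono order_trans)
      show ?thesis using 1 2 3 4 unfolding B_def by linarith
    qed
    have "(\<lambda>k. (vmax ((f ^^ k) z) - c k) / real k) \<longlonglongrightarrow> 0"
    proof (rule Lim_null_comparison)
      show "\<forall>\<^sub>F k in sequentially. norm ((vmax ((f ^^ k) z) - c k) / real k) \<le> B * (1 / real k)"
        using bnd by (auto intro!: always_eventually simp: divide_right_mono)
      show "(\<lambda>k. B * (1 / real k)) \<longlonglongrightarrow> 0"
        by (rule tendsto_mult_right_zero[OF lim_inverse_n'])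
    qed
    then have "(\<lambda>k. c k / real k + (vmax ((f ^^ k) z) - c k) / real k) \<longlonglongrightarrow> L + 0"
      by (rule tendsto_add[OF L1])
    then show ?thesis by (simp add: vmax_def[symmetric] add_divide_distrib[symmetric])
  qed
  have uct: "upper_cycle_time f = L"
    unfolding upper_cycle_time_def
  proof (rule the_equality)
    show "\<forall>z. (\<lambda>k. Max (range (\<lambda>i. (f ^^ k) z $ i)) / real k) \<longlonglongrightarrow> L" using seqz by blast
  next
    fix c' assume "\<forall>z. (\<lambda>k::nat. Max (range (\<lambda>i. (f ^^ k) z $ i)) / real k) \<longlonglongrightarrow> c'"
    then have "(\<lambda>k. Max (range (\<lambda>i. (f ^^ k) x $ i)) / real k) \<longlonglongrightarrow> c'" by blast
    then show "c' = L" using seqz[of x] by (rule LIMSEQ_unique)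
  qed
  show ?thesis
  proof (rule ccontr)
    assume "\<not> ?thesis"
    then have "\<forall>i. \<exists>k. (f ^^ k) x $ i < x $ i + real k * L" unfolding uct by (auto simp: not_le)
    then obtain kk where kk: "\<And>i. (f ^^ kk i) x $ i < x $ i + real (kk i) * L" by metis
    define e where "e k i = (f ^^ k) x $ i - x $ i - real k * L" for k i
    define C where "C k = c k - real k * L" for k
    have C0: "C k \<ge> 0" for k unfolding C_def using L2[of k] by simp
    have E: "e (a + b) i \<le> e a i + C b" for a b i
    proof -
      have "(f ^^ (a + b)) x $ i = (f ^^ a) ((f ^^ b) x) $ i" by (simp add: funpow_add)
      also have "\<dots> \<le> (f ^^ a) x $ i + c b" unfolding c_def by (rule nonexp[OF itop])
      finally show ?thesis unfolding e_def C_def by (simp add: algebra_simps)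
    qed
    define eps where "eps = Min (range (\<lambda>i. - e (kk i) i))"
    have epspos: "eps > 0" unfolding eps_def
    proof (subst Min_gr_iff)
      show "\<forall>a\<in>range (\<lambda>i. - e (kk i) i). 0 < a"
      proof
        fix a assume "a \<in> range (\<lambda>i. - e (kk i) i)"
        then obtain i where "a = - e (kk i) i" by auto
        then show "0 < a" using kk[of i] unfolding e_def by simp
      qed
    qed auto
    have epsle: "e (kk i) i \<le> - eps" for i
    proof -
      have "eps \<le> - e (kk i) i" unfolding eps_def by (rule Min_le) auto
      then show ?thesis by simp
    qed
    have kk1: "kk i \<ge> 1" for i using kk[of i] by (cases "kk i") auto
    define M where "M = Max (range kk)"
    have kkM: "kk i \<le> M" for i unfolding M_def by (rule Max_ge) auto
    have M1: "M \<ge> 1" using kk1 kkM order_trans by blast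
    have step: "\<exists>j. 1 \<le> j \<and> j \<le> M \<and> C m \<le> C (m - j) - eps" if "m \<ge> M" for m
    proof -
      obtain i where i: "c m = ((f ^^ m) x - x) $ i" unfolding c_def using vmax_att by blast
      have Cm: "C m = e m i" unfolding C_def e_def i by simp
      have mk: "m = kk i + (m - kk i)" using kkM[of i] that by simp
      have "e m i \<le> e (kk i) i + C (m - kk i)" using E[of "kk i" "m - kk i" i] mk by simp
      then have "C m \<le> C (m - kk i) - eps" using Cm epsle[of i] by simp
      then show ?thesis using kk1[of i] kkM[of i] by blast
    qed
    define A where "A = Max (C ` {..<M})"
    have bound: "C m \<le> A - eps * real (m div M)" for m
    proof (induction m rule: less_induct)
      case (less m)
      show ?case
      proof (cases "m < M")
        case True
        then have "C m \<le> A" unfolding A_def by (intro Max_ge) auto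
        then show ?thesis using True by simp
      next
        case False
        then obtain j where j: "1 \<le> j" "j \<le> M" "C m \<le> C (m - j) - eps" using step[of m] by (auto simp: not_less)
        have IH: "C (m - j) \<le> A - eps * real ((m - j) div M)" using less j False by simp
        have "m div M = Suc ((m - M) div M)" using False M1 by (simp add: le_div_geq)
        moreover have "(m - M) div M \<le> (m - j) div M" using j by (simp add: div_le_mono)
        ultimately have "real (m div M) \<le> real ((m - j) div M) + 1" by simp
        then have "eps * real (m div M) \<le> eps * real ((m - j) div M) + eps"
          using epspos by (metis mult.commute mult_le_cancel_left_pos distrib_left mult_1_right)
        then show ?thesis using IH j by linarith
      qed
    qed
    obtain N :: nat where N: "real N > A / eps" using reals_Archimedean2 by blast
    have "C (M * N) \<le> A - eps * real N" using bound[of "M * N"] M1 by simp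
    moreover have "eps * real N > A" using N epspos by (simp add: field_simps)
    ultimately show False using C0[of "M * N"] by linarith
  qed
qed

end
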